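(* Let $n\geqslant 3$, $-1<\alpha<\infty$, and let $\{\mathscr{D}_t\}_{t=1}^N$ be the collection of dyadic systems described in the context. There exists a constant $C_4=C_4(n,\alpha)$ such that for every $1\leqslant t\leqslant N$ and every cube $Q\in\mathscr{D}_t$, \[ |\widehat{Q}|_\alpha\leqslant C_4\,|\widehat{Q}\setminus\widehat{Q}_{1/2}|_\alpha. \]
   Context: $\nu$ is Lebesgue measure on the unit ball $\mathbb{B}_n\subset\mathbb{R}^n$ normalized with $\nu(\mathbb{B}_n)=1$, $d\nu_\alpha(z)=c_\alpha(1-|z|^2)^\alpha d\nu(z)$ with $\nu_\alpha(\mathbb{B}_n)=1$, $|E|_\alpha=\nu_\alpha(E)$. On $\partial\mathbb{B}_n$ let $\rho(x,y)=\arccos\langle x,y\rangle$, $B_\rho(x,r)=\{y\in\partial\mathbb{B}_n:\rho(x,y)<r\}$, $\mathrm{diam}_\rho(Q)=\sup\{\rho(x,y):x,y\in Q\}$. A dyadic system on $(\partial\mathbb{B}_n,\rho)$ is a collection $\{Q_{k,i}: k\geqslant1,\ 1\leqslant i\leqslant M(k)\}$ of subsets such that for each $k$ the $Q_{k,i}$ are pairwise disjoint and cover $\partial\mathbb{B}_n$, and for $k\leqslant l$ either $Q_{l,j}\subset Q_{k,i}$ or $Q_{l,j}\cap Q_{k,i}=\emptyset$; it is associated to $(\eta,\kappa_0,\kappa_1)$ if there are points $x_{k,i}$ with $B_\rho(x_{k,i},\kappa_0\eta^k)\subset Q_{k,i}\subset B_\rho(x_{k,i},\kappa_1\eta^k)$.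 $\{\mathscr{D}_t\}_{t=1}^N$ is a finite collection of dyadic systems each associated to $(1/96,1/12,4)$, such that for every ball $B_\rho\subset\partial\mathbb{B}_n$ there exist $t$ and $Q\in\mathscr{D}_t$ with $B_\rho\subset Q$ and $\mathrm{diam}_\rho(Q)\leqslant C_3\mathrm{diam}_\rho(B_\rho)$, with $N,C_3$ depending only on $n$. For a cube $Q$ and $0<\varepsilon\leqslant1$, $\widehat{Q}_\varepsilon=\{z\in\mathbb{B}_n:z/|z|\in Q,\ 1-\tfrac{\varepsilon}{2}\mathrm{diam}_\rho(Q)<|z|<1\}$ and $\widehat Q=\widehat Q_1$. *)

theory Defs
  imports "HOL-Analysis.Analysis"
begin

definition nu_measure :: "(real^'n::finite) measure" where
  "nu_measure = density (restrict_space lebesgue (ball 0 1))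
      (\<lambda>z. ennreal (1 / measure lebesgue (ball (0::real^'n) 1)))"

definition c_alpha :: "real \<Rightarrow> 'n::finite itself \<Rightarrow> real" where
  "c_alpha \<alpha> TYPE('n) = 1 / (\<integral>z. (1 - norm (z::real^'n)^2) powr \<alpha> \<partial>nu_measure)"

definition nu_alpha_measure :: "real \<Rightarrow> (real^'n::finite) measure" where
  "nu_alpha_measure \<alpha> = density nu_measure
      (\<lambda>z. ennreal (c_alpha \<alpha> TYPE('n) * (1 - norm z ^ 2) powr \<alpha>))"

definition nu_alpha :: "real \<Rightarrow> (real^'n::finite) set \<Rightarrow> real" where
  "nu_alpha \<alpha> E = measure (nu_alpha_measure \<alpha>) E"

definition rho :: "real^'n::finite \<Rightarrow> real^'n \<Rightarrow> real" where
  "rho x y = arccos (x \<bullet> y)"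

definition ball_rho :: "real^'n::finite \<Rightarrow> real \<Rightarrow> (real^'n) set" where
  "ball_rho x r = {y \<in> sphere 0 1. rho x y < r}"

definition diam_rho :: "(real^'n::finite) set \<Rightarrow> real" where
  "diam_rho Q = Sup {rho x y | x y. x \<in> Q \<and> y \<in> Q}"

definition dyadic_system :: "(nat \<Rightarrow> nat) \<Rightarrow> (nat \<Rightarrow> nat \<Rightarrow> (real^'n::finite) set) \<Rightarrow> bool" where
  "dyadic_system M D \<longleftrightarrow>
     (\<forall>k\<ge>1. (\<forall>i\<in>{1..M k}. \<forall>j\<in>{1..M k}. i \<noteq> j \<longrightarrow> D k i \<inter> D k j = {})
            \<and> (\<Union>i\<in>{1..M k}. D k i) = sphere 0 1) \<and>
     (\<forall>k l i j. 1 \<le> k \<and> k \<le> l \<and> i \<in> {1..M k} \<and> j \<in> {1..M l} \<longrightarrow>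
        D l j \<subseteq> D k i \<or> D l j \<inter> D k i = {})"

definition dyadic_associated :: "(nat \<Rightarrow> nat) \<Rightarrow> (nat \<Rightarrow> nat \<Rightarrow> (real^'n::finite) set)
    \<Rightarrow> real \<Rightarrow> real \<Rightarrow> real \<Rightarrow> bool" where
  "dyadic_associated M D \<eta> \<kappa>0 \<kappa>1 \<longleftrightarrow>
     (\<forall>k\<ge>1. \<forall>i\<in>{1..M k}. \<exists>x\<in>sphere 0 1.
        ball_rho x (\<kappa>0 * \<eta>^k) \<subseteq> D k i \<and> D k i \<subseteq> ball_rho x (\<kappa>1 * \<eta>^k))"

definition cubes :: "(nat \<Rightarrow> nat) \<Rightarrow> (nat \<Rightarrow> nat \<Rightarrow> (real^'n::finite) set) \<Rightarrow> (real^'n) set set" where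
  "cubes M D = {D k i | k i. 1 \<le> k \<and> i \<in> {1..M k}}"

definition tent :: "(real^'n::finite) set \<Rightarrow> real \<Rightarrow> (real^'n) set" where
  "tent Q \<epsilon> = {z \<in> ball 0 1. (1 / norm z) *\<^sub>R z \<in> Q \<and>
                  1 - \<epsilon> / 2 * diam_rho Q < norm z \<and> norm z < 1}"

end

theory Submission
  imports Defs
begin

definition cone_of :: "(real^'n::finite) set \<Rightarrow> (real^'n) set" where
  "cone_of Q = {z. z \<noteq> 0 \<and> (1 / norm z) *\<^sub>R z \<in> Q}"

lemma scale_sets:
  fixes S :: "(real^'n::finite) set"
  assumes "S \<in> sets lebesgue" "r \<noteq> 0"
  shows "(\<lambda>x. r *\<^sub>R x) ` S \<in> sets lebesgue"
proof -
  have "(\<lambda>x. r *\<^sub>R x) ` S = (\<lambda>x. (1/r) *\<^sub>R x) -` S \<inter> space lebesgue"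
  proof (rule set_eqI)
    fix x :: "real^'n"
    have e: "x = r *\<^sub>R ((1/r) *\<^sub>R x)" using assms(2) by simp
    show "x \<in> (\<lambda>x. r *\<^sub>R x) ` S \<longleftrightarrow> x \<in> (\<lambda>x. (1/r) *\<^sub>R x) -` S \<inter> space lebesgue"
    proof
      assume "x \<in> (\<lambda>x. r *\<^sub>R x) ` S"
      then obtain y where "y \<in> S" "x = r *\<^sub>R y" by blast
      then show "x \<in> (\<lambda>x. (1/r) *\<^sub>R x) -` S \<inter> space lebesgue" using assms(2) by simp
    next
      assume "x \<in> (\<lambda>x. (1/r) *\<^sub>R x) -` S \<inter> space lebesgue"
      then show "x \<in> (\<lambda>x. r *\<^sub>R x) ` S" using e by blast
    qed
  qed
  also have "\<dots> \<in> sets lebesgue"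
    using measurable_sets[OF lebesgue_measurable_scaling assms(1)] by simp
  finally show ?thesis .
qed


lemma cone_of_scale:
  fixes Q :: "(real^'n::finite) set"
  assumes t: "t > 0" and x: "x \<in> cone_of Q"
  shows "t *\<^sub>R x \<in> cone_of Q"
proof -
  have x0: "x \<noteq> 0" and xq: "(1 / norm x) *\<^sub>R x \<in> Q" using x by (auto simp: cone_of_def)
  have n: "norm (t *\<^sub>R x) = t * norm x" using t by simp
  have "(1 / norm (t *\<^sub>R x)) *\<^sub>R (t *\<^sub>R x) = ((1 / (t * norm x)) * t) *\<^sub>R x"
    by (simp only: n scaleR_scaleR)
  also have "(1 / (t * norm x)) * t = 1 / norm x" using t by simp
  finally have "(1 / norm (t *\<^sub>R x)) *\<^sub>R (t *\<^sub>R x) = (1 / norm x) *\<^sub>R x" .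
  then show ?thesis using xq x0 t by (simp add: cone_of_def)
qed

lemma cone_scale:
  fixes Q :: "(real^'n::finite) set"
  assumes t: "t > 0"
  shows "(\<lambda>x. t *\<^sub>R x) ` (cone_of Q \<inter> ball 0 1) = cone_of Q \<inter> ball 0 t"
proof (rule set_eqI)
  fix z :: "real^'n"
  show "z \<in> (\<lambda>x. t *\<^sub>R x) ` (cone_of Q \<inter> ball 0 1) \<longleftrightarrow> z \<in> cone_of Q \<inter> ball 0 t"
  proof
    assume "z \<in> (\<lambda>x. t *\<^sub>R x) ` (cone_of Q \<inter> ball 0 1)"
    then obtain y where y: "y \<in> cone_of Q" "norm y < 1" "z = t *\<^sub>R y" by auto
    have "norm z = t * norm y" using y t by simp
    also have "\<dots> < t" using y t by simp
    finally show "z \<in> cone_of Q \<inter> ball 0 t" using cone_of_scale[OF t y(1)] y by simp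
  next
    assume z: "z \<in> cone_of Q \<inter> ball 0 t"
    have e: "z = t *\<^sub>R ((1/t) *\<^sub>R z)" using t by simp
    have "norm ((1/t) *\<^sub>R z) = norm z / t" using t by simp
    also have "\<dots> < 1" using z t by simp
    finally have "(1/t) *\<^sub>R z \<in> cone_of Q \<inter> ball 0 1"
      using cone_of_scale[of "1/t" z Q] z t by simp
    then show "z \<in> (\<lambda>x. t *\<^sub>R x) ` (cone_of Q \<inter> ball 0 1)" using e by blast
  qed
qed


lemma cone_ball_measure:
  fixes Q :: "(real^'n::finite) set"
  assumes m: "cone_of Q \<inter> ball 0 1 \<in> sets lebesgue" and t0: "0 \<le> t"
  shows "cone_of Q \<inter> ball 0 t \<in> sets lebesgue \<and>
    measure lebesgue (cone_of Q \<inter> ball 0 t) = t ^ CARD('n) * measure lebesgue (cone_of Q \<inter> ball 0 1)"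
proof (cases "t = 0")
  case True then show ?thesis by simp
next
  case False
  then have t: "t > 0" using t0 by simp
  have "measure lebesgue ((\<lambda>x. t *\<^sub>R x + 0) ` (cone_of Q \<inter> ball 0 1)) = \<bar>t\<bar> ^ DIM(real^'n) * measure lebesgue (cone_of Q \<inter> ball 0 1)"
    by (rule measure_lebesgue_affine)
  then have "measure lebesgue ((\<lambda>x. t *\<^sub>R x) ` (cone_of Q \<inter> ball 0 1)) = t ^ CARD('n) * measure lebesgue (cone_of Q \<inter> ball 0 1)"
    using t by simp
  moreover have "(\<lambda>x. t *\<^sub>R x) ` (cone_of Q \<inter> ball 0 1) \<in> sets lebesgue"
    using scale_sets[OF m] t by simp
  ultimately show ?thesis using cone_scale[OF t, of Q] by simp
qed

lemma cone_ball_sets: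
  fixes Q :: "(real^'n::finite) set"
  assumes s0: "0 \<le> s0" "s0 < 1"
    and T: "cone_of Q \<inter> {z. s0 < norm z \<and> norm z < 1} \<in> sets lebesgue"
  shows "cone_of Q \<inter> ball 0 1 \<in> sets lebesgue"
proof -
  let ?T = "cone_of Q \<inter> {z. s0 < norm z \<and> norm z < 1}"
  let ?U = "(\<Union>q\<in>\<rat> \<inter> {0<..1::real}. (\<lambda>x. q *\<^sub>R x) ` ?T)"
  have sub1: "cone_of Q \<inter> ball 0 1 \<subseteq> ?U"
  proof
    fix z assume z: "z \<in> cone_of Q \<inter> ball 0 1"
    define r where "r = norm z"
    have r: "0 < r" "r < 1" using z by (auto simp: r_def cone_of_def)
    have "\<exists>q. q \<in> \<rat> \<and> r < q \<and> q < 1 \<and> q * s0 < r"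
    proof (cases "s0 = 0")
      case True
      from Rats_dense_in_real[OF r(2)] obtain q where "q \<in> \<rat>" "r < q" "q < 1"
        by blast
      then show ?thesis using True r by auto
    next
      case False
      then have s: "s0 > 0" using s0 by simp
      have "r < r / s0" using r s s0 by (simp add: less_divide_eq)
      then have "r < min (r / s0) 1" using r by simp
      from Rats_dense_in_real[OF this] obtain q where q: "q \<in> \<rat>" "r < q" "q < min (r / s0) 1"
        by blast
      then have "q * s0 < r" using s by (simp add: less_divide_eq)
      then show ?thesis using q by auto
    qed
    then obtain q where q: "q \<in> \<rat>" "r < q" "q < 1" "q * s0 < r" by blast
    have q0: "q > 0" using q r by simp
    have e: "z = q *\<^sub>R ((1/q) *\<^sub>R z)" using q0 by simp
    have n: "norm ((1/q) *\<^sub>R z) = r / q" using q0 by (simp add: r_def)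
    have "r / q < 1" using q q0 by simp
    moreover have "s0 < r / q" using q q0 by (simp add: less_divide_eq mult.commute)
    moreover have "(1/q) *\<^sub>R z \<in> cone_of Q" using z q0 cone_of_scale[of "1/q" z Q] by simp
    ultimately have "(1/q) *\<^sub>R z \<in> ?T" using n by simp
    then have "q *\<^sub>R ((1/q) *\<^sub>R z) \<in> (\<lambda>x. q *\<^sub>R x) ` ?T" by (rule imageI)
    then have "z \<in> (\<lambda>x. q *\<^sub>R x) ` ?T" using e by simp
    moreover have "q \<in> \<rat> \<inter> {0<..1}" using q q0 by simp
    ultimately show "z \<in> ?U" by (rule UN_I[rotated])
  qed
  have sub2: "?U \<subseteq> cone_of Q \<inter> ball 0 1"
  proof (rule UN_least)
    fix q :: real assume q: "q \<in> \<rat> \<inter> {0<..1}"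
    show "(\<lambda>x. q *\<^sub>R x) ` ?T \<subseteq> cone_of Q \<inter> ball 0 1"
    proof
      fix y assume "y \<in> (\<lambda>x. q *\<^sub>R x) ` ?T"
      then obtain x where x: "x \<in> ?T" "y = q *\<^sub>R x" by blast
      have "q * norm x \<le> norm x" using q by (simp add: mult_left_le_one_le)
      then have "norm y < 1" using q x by simp
      then show "y \<in> cone_of Q \<inter> ball 0 1" using q x cone_of_scale[of q x Q] by simp
    qed
  qed
  have "countable (\<rat> \<inter> {0<..1::real})" using countable_rat by auto
  then have "?U \<in> sets lebesgue"
    by (intro sets.countable_UN'') (auto intro!: scale_sets T)
  moreover have "cone_of Q \<inter> ball 0 1 = ?U" using sub1 sub2 by (rule subset_antisym)
  ultimately show ?thesis by simp
qed

lemma bl: "A \<in> sets borel \<Longrightarrow> (A:: ('a::euclidean_space) set) \<in> sets lebesgue"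
  using sets_completionI_sets[of A lborel] by simp

lemma sub_ball_fm:
  fixes A :: "(real^'n::finite) set"
  assumes "A \<in> sets lebesgue" "A \<subseteq> ball 0 1"
  shows "A \<in> fmeasurable lebesgue"
  using assms bounded_set_imp_lmeasurable bounded_subset[OF bounded_ball] by blast

lemma nu_sets:
  fixes A :: "(real^'n::finite) set"
  assumes "A \<in> sets lebesgue" "A \<subseteq> ball 0 1"
  shows "A \<in> sets nu_measure" "A \<in> sets (nu_alpha_measure \<alpha>)"
  using assms by (simp_all add: nu_measure_def nu_alpha_measure_def sets_restrict_space_iff)

lemma nu_sets_rev:
  fixes A :: "(real^'n::finite) set"
  assumes "A \<in> sets (nu_alpha_measure \<alpha>)"
  shows "A \<in> sets lebesgue" "A \<subseteq> ball 0 1"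
  using assms by (simp_all add: nu_measure_def nu_alpha_measure_def sets_restrict_space_iff)

lemma nu_emeasure:
  fixes A :: "(real^'n::finite) set"
  assumes A: "A \<in> sets lebesgue" "A \<subseteq> ball 0 1"
  shows "emeasure nu_measure A = ennreal (measure lebesgue A / measure lebesgue (ball (0::real^'n) 1))"
proof -
  let ?V = "measure lebesgue (ball (0::real^'n) 1)"
  have AR: "A \<in> sets (restrict_space lebesgue (ball (0::real^'n) 1))"
    using A by (simp add: sets_restrict_space_iff)
  have "emeasure nu_measure A = (\<integral>\<^sup>+ x. ennreal (1 / ?V) * indicator A x \<partial>restrict_space lebesgue (ball 0 1))"
    unfolding nu_measure_def using AR by (subst emeasure_density) (auto simp: mult.commute)
  also have "\<dots> = ennreal (1 / ?V) * emeasure (restrict_space lebesgue (ball 0 1)) A"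
    using AR by (rule nn_integral_cmult_indicator)
  also have "emeasure (restrict_space lebesgue (ball 0 1)) A = emeasure lebesgue A"
    using A by (subst emeasure_restrict_space) auto
  also have "emeasure lebesgue A = ennreal (measure lebesgue A)"
    using sub_ball_fm[OF A] by (rule emeasure_eq_measure2)
  also have "ennreal (1 / ?V) * ennreal (measure lebesgue A) = ennreal (measure lebesgue A / ?V)"
    by (simp add: ennreal_mult'[symmetric])
  finally show ?thesis .
qed

lemma c_alpha_nonneg: "0 \<le> c_alpha \<alpha> TYPE('n::finite)"
  unfolding c_alpha_def by (simp add: integral_nonneg)

lemma nu_alpha_bound:
  fixes A :: "(real^'n::finite) set"
  assumes A: "A \<in> sets lebesgue" "A \<subseteq> ball 0 1"
    and L0: "0 \<le> L" and lo: "\<And>z. z \<in> A \<Longrightarrow> L \<le> (1 - norm z ^ 2) powr \<alpha>"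
    and hi: "\<And>z. z \<in> A \<Longrightarrow> (1 - norm z ^ 2) powr \<alpha> \<le> H"
  shows "ennreal (c_alpha \<alpha> TYPE('n) * L * measure lebesgue A / measure lebesgue (ball (0::real^'n) 1))
           \<le> emeasure (nu_alpha_measure \<alpha>) A"
    and "emeasure (nu_alpha_measure \<alpha>) A \<le>
         ennreal (c_alpha \<alpha> TYPE('n) * H * measure lebesgue A / measure lebesgue (ball (0::real^'n) 1))"
proof -
  let ?c = "c_alpha \<alpha> TYPE('n)"
  let ?V = "measure lebesgue (ball (0::real^'n) 1)"
  let ?f = "\<lambda>z::real^'n. ennreal (?c * (1 - norm z ^ 2) powr \<alpha>)"
  have c: "0 \<le> ?c" by (rule c_alpha_nonneg)
  have fm: "?f \<in> borel_measurable nu_measure"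
  proof -
    have "?f \<in> borel_measurable lebesgue" by (rule measurable_completion) measurable
    then have "?f \<in> borel_measurable (restrict_space lebesgue (ball 0 1))"
      by (rule measurable_restrict_space1)
    then show ?thesis unfolding nu_measure_def by simp
  qed
  have An: "A \<in> sets nu_measure" using nu_sets[OF A] by simp
  have eq: "emeasure (nu_alpha_measure \<alpha>) A = (\<integral>\<^sup>+ x. ?f x * indicator A x \<partial>nu_measure)"
    unfolding nu_alpha_measure_def using fm An by (subst emeasure_density) auto
  have nuA: "emeasure nu_measure A = ennreal (measure lebesgue A / ?V)"
    by (rule nu_emeasure[OF A])
  have "(\<integral>\<^sup>+ x. ennreal (?c * L) * indicator A x \<partial>nu_measure) \<le> (\<integral>\<^sup>+ x. ?f x * indicator A x \<partial>nu_measure)"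
  proof (rule nn_integral_mono)
    fix x show "ennreal (?c * L) * indicator A x \<le> ?f x * indicator A x"
      using lo[of x] c by (cases "x \<in> A") (auto intro!: ennreal_leI mult_left_mono)
  qed
  moreover have "(\<integral>\<^sup>+ x. ennreal (?c * L) * indicator A x \<partial>nu_measure) = ennreal (?c * L) * ennreal (measure lebesgue A / ?V)"
    using An nuA by (simp add: nn_integral_cmult_indicator)
  ultimately show "ennreal (?c * L * measure lebesgue A / ?V) \<le> emeasure (nu_alpha_measure \<alpha>) A"
    using eq c L0 by (auto simp: ennreal_mult'[symmetric])
  have "(\<integral>\<^sup>+ x. ?f x * indicator A x \<partial>nu_measure) \<le> (\<integral>\<^sup>+ x. ennreal (?c * H) * indicator A x \<partial>nu_measure)"
  proof (rule nn_integral_mono)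
    fix x show "?f x * indicator A x \<le> ennreal (?c * H) * indicator A x"
      using hi[of x] c by (cases "x \<in> A") (auto intro!: ennreal_leI mult_left_mono)
  qed
  moreover have "(\<integral>\<^sup>+ x. ennreal (?c * H) * indicator A x \<partial>nu_measure) = ennreal (?c * H) * ennreal (measure lebesgue A / ?V)"
    using An nuA by (simp add: nn_integral_cmult_indicator)
  moreover have "0 \<le> H \<or> A = {}" using hi powr_ge_zero by (meson ex_in_conv order_trans)
  ultimately show "emeasure (nu_alpha_measure \<alpha>) A \<le> ennreal (?c * H * measure lebesgue A / ?V)"
    using eq c by (auto simp: ennreal_mult'[symmetric])
qed

lemma shell:
  fixes Q :: "(real^'n::finite) set"
  assumes m: "cone_of Q \<inter> ball 0 1 \<in> sets lebesgue" and sr: "0 \<le> s" "s \<le> r" "r \<le> 1"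
  shows "cone_of Q \<inter> {z. s \<le> norm z \<and> norm z < r} \<in> sets lebesgue"
    and "cone_of Q \<inter> {z. s \<le> norm z \<and> norm z < r} \<subseteq> ball 0 1"
    and "measure lebesgue (cone_of Q \<inter> {z. s \<le> norm z \<and> norm z < r}) =
           (r ^ CARD('n) - s ^ CARD('n)) * measure lebesgue (cone_of Q \<inter> ball 0 1)"
proof -
  have eq: "cone_of Q \<inter> {z. s \<le> norm z \<and> norm z < r} = (cone_of Q \<inter> ball 0 r) - (cone_of Q \<inter> ball 0 s)"
    by auto
  have r: "cone_of Q \<inter> ball 0 r \<in> sets lebesgue"
     "measure lebesgue (cone_of Q \<inter> ball 0 r) = r ^ CARD('n) * measure lebesgue (cone_of Q \<inter> ball 0 1)"
    using cone_ball_measure[OF m, of r] sr by auto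
  have s: "cone_of Q \<inter> ball 0 s \<in> sets lebesgue"
     "measure lebesgue (cone_of Q \<inter> ball 0 s) = s ^ CARD('n) * measure lebesgue (cone_of Q \<inter> ball 0 1)"
    using cone_ball_measure[OF m, of s] sr by auto
  have rb: "cone_of Q \<inter> ball 0 r \<subseteq> ball 0 1" using sr by auto
  have rf: "cone_of Q \<inter> ball 0 r \<in> fmeasurable lebesgue" by (rule sub_ball_fm[OF r(1) rb])
  show "cone_of Q \<inter> {z. s \<le> norm z \<and> norm z < r} \<in> sets lebesgue"
    unfolding eq using r s by auto
  show "cone_of Q \<inter> {z. s \<le> norm z \<and> norm z < r} \<subseteq> ball 0 1" using sr by auto
  have "measure lebesgue ((cone_of Q \<inter> ball 0 r) - (cone_of Q \<inter> ball 0 s)) =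
     measure lebesgue (cone_of Q \<inter> ball 0 r) - measure lebesgue (cone_of Q \<inter> ball 0 s)"
    by (rule measurable_measure_Diff[OF rf s(1)]) (use sr in auto)
  then show "measure lebesgue (cone_of Q \<inter> {z. s \<le> norm z \<and> norm z < r}) =
           (r ^ CARD('n) - s ^ CARD('n)) * measure lebesgue (cone_of Q \<inter> ball 0 1)"
    unfolding eq r(2) s(2) by (simp add: algebra_simps)
qed

lemma powr_bounds:
  fixes x y m \<alpha> :: real
  assumes y: "0 < y" and m: "1 \<le> m" and x: "y / m \<le> x" "x \<le> y"
  shows "x powr \<alpha> \<le> m powr \<bar>\<alpha>\<bar> * y powr \<alpha>"
    and "m powr (-\<bar>\<alpha>\<bar>) * y powr \<alpha> \<le> x powr \<alpha>"
proof -
  have ym: "0 < y / m" using y m by simp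
  have x0: "0 < x" using ym x by simp
  have ymp: "(y / m) powr \<alpha> = m powr (-\<alpha>) * y powr \<alpha>"
    using y m by (simp add: powr_divide powr_minus_divide)
  have "x powr \<alpha> \<le> m powr \<bar>\<alpha>\<bar> * y powr \<alpha> \<and> m powr (-\<bar>\<alpha>\<bar>) * y powr \<alpha> \<le> x powr \<alpha>"
  proof (cases "0 \<le> \<alpha>")
    case True
    have "x powr \<alpha> \<le> y powr \<alpha>" using True x0 x by (intro powr_mono2) auto
    also have "\<dots> \<le> m powr \<alpha> * y powr \<alpha>"
      using ge_one_powr_ge_zero[OF m True] mult_right_mono[of 1 "m powr \<alpha>" "y powr \<alpha>"] by simp
    finally have 1: "x powr \<alpha> \<le> m powr \<bar>\<alpha>\<bar> * y powr \<alpha>" using True by simp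
    have "m powr (-\<bar>\<alpha>\<bar>) * y powr \<alpha> = (y / m) powr \<alpha>" using True ymp by simp
    also have "\<dots> \<le> x powr \<alpha>" using True ym x by (intro powr_mono2) auto
    finally show ?thesis using 1 by simp
  next
    case False
    have "x powr \<alpha> \<le> (y / m) powr \<alpha>" using False ym x by (intro powr_mono2') auto
    also have "\<dots> = m powr \<bar>\<alpha>\<bar> * y powr \<alpha>" using False ymp by simp
    finally have 1: "x powr \<alpha> \<le> m powr \<bar>\<alpha>\<bar> * y powr \<alpha>" .
    have "m powr \<alpha> \<le> 1" using False m by (simp add: powr_le_one_le ge_one_powr_ge_zero powr_mono2' 
        order.trans[OF powr_mono[of \<alpha> 0 m]])
    then have "m powr (-\<bar>\<alpha>\<bar>) * y powr \<alpha> \<le> y powr \<alpha>"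
      using False by (intro mult_left_le_one_le) auto
    also have "\<dots> \<le> x powr \<alpha>" using False x0 x by (intro powr_mono2') auto
    finally show ?thesis using 1 by simp
  qed
  then show "x powr \<alpha> \<le> m powr \<bar>\<alpha>\<bar> * y powr \<alpha>" and "m powr (-\<bar>\<alpha>\<bar>) * y powr \<alpha> \<le> x powr \<alpha>" by auto
qed

lemma pow_diff_upper:
  fixes a b :: real
  assumes "0 \<le> a" "a \<le> b" "b \<le> 1"
  shows "b ^ n - a ^ n \<le> real n * (b - a)"
proof (induction n)
  case 0 then show ?case by simp
next
  case (Suc n)
  have "b ^ Suc n - a ^ Suc n = b * (b ^ n - a ^ n) + a ^ n * (b - a)" by (simp add: algebra_simps)
  also have "\<dots> \<le> 1 * (b ^ n - a ^ n) + 1 * (b - a)"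
  proof (intro add_mono mult_right_mono)
    show "b \<le> 1" using assms by simp
    show "0 \<le> b ^ n - a ^ n" using assms by (simp add: power_mono)
    show "a ^ n \<le> 1" using assms by (simp add: power_le_one)
    show "0 \<le> b - a" using assms by simp
  qed
  also have "\<dots> \<le> real (Suc n) * (b - a)" using Suc by (simp add: algebra_simps)
  finally show ?case .
qed

lemma pow_diff_lower:
  fixes a b :: real
  assumes "0 \<le> a" "a \<le> b" "1 \<le> n"
  shows "(b - a) * a ^ (n - 1) \<le> b ^ n - a ^ n"
proof -
  obtain k where n: "n = Suc k" using assms by (cases n) auto
  have "b ^ n = b * b ^ k" "a ^ n = a * a ^ k" using n by simp_all
  moreover have "a ^ k \<le> b ^ k" using assms by (simp add: power_mono)
  then have "b * a ^ k \<le> b * b ^ k" using assms by (simp add: mult_left_mono)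
  ultimately show ?thesis using n by (simp add: algebra_simps)
qed

lemma geo_term:
  fixes d \<alpha> :: real
  assumes d: "0 < d"
  shows "(d / 2 ^ j) powr \<alpha> * (d / 2 ^ (j + 3)) = d powr \<alpha> * d / 8 * (2 powr (-(1 + \<alpha>))) ^ j"
proof -
  have p: "(2::real) ^ j = 2 powr real j" by (simp add: powr_realpow)
  have "(d / 2 ^ j) powr \<alpha> = d powr \<alpha> / 2 powr (real j * \<alpha>)"
    using d by (simp add: p powr_divide powr_powr)
  moreover have "(2 powr (-(1 + \<alpha>))) ^ j = 2 powr (- real j - \<alpha> * real j)"
  proof -
    have "(2 powr (-(1 + \<alpha>))) ^ j = (2 powr (-(1 + \<alpha>))) powr real j"
      by (rule powr_realpow[symmetric]) simp
    also have "\<dots> = 2 powr (-(1 + \<alpha>) * real j)" by (rule powr_powr)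
    also have "-(1 + \<alpha>) * real j = - real j - \<alpha> * real j" by algebra
    finally show ?thesis .
  qed
  moreover have "(2::real) ^ (j + 3) = 8 * 2 powr real j" by (simp add: p power_add)
  ultimately show ?thesis
    by (simp add: powr_diff powr_minus field_simps)
qed

lemma x_bounds:
  fixes r u :: real
  assumes "r = 1 - u" "0 \<le> u" "u \<le> 1"
  shows "u \<le> 1 - r ^ 2" "1 - r ^ 2 \<le> 2 * u"
proof -
  have e: "1 - r ^ 2 = 2 * u - u * u" unfolding assms(1) by (simp add: power2_eq_square algebra_simps)
  have "u * u \<le> u" using assms by (simp add: mult_left_le_one_le)
  then show "u \<le> 1 - r ^ 2" using e by simp
  show "1 - r ^ 2 \<le> 2 * u" using e assms by simp
qed

lemma find_j:
  fixes u d :: real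
  assumes "0 < u" "u < d / 4"
  shows "\<exists>j. d / 2 ^ (j + 3) < u \<and> u \<le> d / 2 ^ (j + 2)"
proof -
  have d: "0 < d" using assms by simp
  obtain n where n: "(1/2::real) ^ n < u * 8 / d"
    using real_arch_pow_inv[of "u * 8 / d" "1/2"] assms d by auto
  have "d / 2 ^ (n + 3) < u"
  proof -
    have "(1/2::real) ^ n = 1 / 2 ^ n" by (simp add: power_one_over)
    then have "1 / 2 ^ n < u * 8 / d" using n by simp
    then have "d < u * 8 * 2 ^ n" using d by (simp add: field_simps)
    then show ?thesis by (simp add: field_simps power_add)
  qed
  then have ex: "\<exists>n. d / 2 ^ (n + 3) < u" by blast
  define j where "j = (LEAST n. d / 2 ^ (n + 3) < u)"
  have j1: "d / 2 ^ (j + 3) < u" unfolding j_def by (rule LeastI_ex[OF ex])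
  have j2: "u \<le> d / 2 ^ (j + 2)"
  proof (cases j)
    case 0 then show ?thesis using assms by simp
  next
    case (Suc k)
    have "k < j" using Suc by simp
    then have "\<not> d / 2 ^ (k + 3) < u" unfolding j_def by (rule not_less_Least)
    moreover have "k + 3 = j + 2" using Suc by simp
    ultimately show ?thesis by simp
  qed
  show ?thesis using j1 j2 by blast
qed

lemma diam_le_pi:
  fixes Q :: "(real^'n::finite) set"
  assumes Qs: "Q \<subseteq> sphere 0 1" and Q: "Q \<noteq> {}"
  shows "diam_rho Q \<le> pi"
  unfolding diam_rho_def
proof (rule cSup_least)
  show "{rho x y |x y. x \<in> Q \<and> y \<in> Q} \<noteq> {}" using Q by blast
  fix s assume "s \<in> {rho x y |x y. x \<in> Q \<and> y \<in> Q}"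
  then obtain x y where s: "s = rho x y" "x \<in> Q" "y \<in> Q" by blast
  have "\<bar>x \<bullet> y\<bar> \<le> norm x * norm y" by (rule Cauchy_Schwarz_ineq2)
  moreover have "norm x = 1" "norm y = 1" using s Qs by auto
  ultimately have "\<bar>x \<bullet> y\<bar> \<le> 1" by simp
  then show "s \<le> pi" unfolding s rho_def by (intro arccos_ubound) auto
qed

definition rho0 :: "real \<Rightarrow> real" where "rho0 \<alpha> = 2 powr (-(1 + \<alpha>))"

definition Cst :: "real \<Rightarrow> nat \<Rightarrow> real" where
  "Cst \<alpha> n = (8 powr \<bar>\<alpha>\<bar> * real n / 8 / (1 - rho0 \<alpha>)) / (4 powr (-\<bar>\<alpha>\<bar>) / 32 * (1/10) ^ (n - 1))"

lemma rho0_lt: "-1 < \<alpha> \<Longrightarrow> rho0 \<alpha> < 1"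
  unfolding rho0_def by (intro powr_less_one) auto

lemma Cst_nonneg: "-1 < \<alpha> \<Longrightarrow> 0 \<le> Cst \<alpha> n"
  using rho0_lt[of \<alpha>] unfolding Cst_def by (intro divide_nonneg_pos mult_nonneg_nonneg) auto

lemma tent_eq:
  fixes Q :: "(real^'n::finite) set"
  assumes Qs: "Q \<subseteq> sphere 0 1"
  shows "tent Q e = cone_of Q \<inter> {z. 1 - e / 2 * diam_rho Q < norm z \<and> norm z < 1}"
proof -
  have "0 \<notin> Q" using Qs by auto
  then show ?thesis unfolding tent_def cone_of_def by (auto simp: dist_norm)
qed


lemma core:
  fixes Q :: "(real^'n::finite) set" and \<alpha> :: real
  assumes Qs: "Q \<subseteq> sphere 0 1" and \<alpha>: "-1 < \<alpha>"
  shows "nu_alpha \<alpha> (tent Q 1) \<le> (1 + Cst \<alpha> CARD('n)) * nu_alpha \<alpha> (tent Q 1 - tent Q (1/2))"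
proof -
  let ?M = "nu_alpha_measure \<alpha> :: (real^'n) measure"
  let ?n = "CARD('n)"
  let ?c = "c_alpha \<alpha> TYPE('n)"
  let ?V = "measure lebesgue (ball (0::real^'n) 1)"
  define d where "d = diam_rho Q"
  define a where "a = 1 - d / 2"
  define b where "b = 1 - d / 4"
  define T where "T = tent Q 1"
  define D where "D = tent Q 1 - tent Q (1/2)"
  define C where "C = cone_of Q"
  define \<rho> where "\<rho> = rho0 \<alpha>"
  have C4: "0 \<le> 1 + Cst \<alpha> ?n" using Cst_nonneg[OF \<alpha>] by simp
  have Teq: "T = C \<inter> {z. a < norm z \<and> norm z < 1}"
    unfolding T_def C_def a_def d_def using tent_eq[OF Qs, of 1] by simp
  have Deq: "D = C \<inter> {z. a < norm z \<and> norm z \<le> b}"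
    unfolding D_def C_def a_def b_def d_def using tent_eq[OF Qs, of 1] tent_eq[OF Qs, of "1/2"] by auto
  show ?thesis
  proof (cases "T = {}")
    case True
    then show ?thesis unfolding T_def nu_alpha_def using C4 by simp
  next
    case False
    then obtain z0 where z0: "z0 \<in> T" by blast
    have Qne: "Q \<noteq> {}" using z0 unfolding Teq C_def cone_of_def by auto
    have d0: "0 < d" using z0 unfolding Teq a_def by auto
    have dpi: "d \<le> pi" unfolding d_def by (rule diam_le_pi[OF Qs Qne])
    have d32: "d \<le> 3.2" using dpi pi_approx by simp
    show ?thesis
    proof (cases "T \<in> sets ?M")
      case False
      then show ?thesis unfolding T_def nu_alpha_def using C4 by (simp add: measure_notin_sets)
    next
      case True
      have Tl: "T \<in> sets lebesgue" using nu_sets_rev(1)[OF True] .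
      have Tb: "T \<subseteq> ball 0 1" using nu_sets_rev(2)[OF True] .
      define s0 where "s0 = max a (1/2)"
      have s0: "0 \<le> s0" "s0 < 1" using d0 unfolding s0_def a_def by auto
      have "C \<inter> {z. s0 < norm z \<and> norm z < 1} = T \<inter> {z. s0 < norm z}"
        unfolding Teq s0_def by auto
      also have "\<dots> \<in> sets lebesgue"
      proof -
        have "{z::real^'n. s0 < norm z} \<in> sets lebesgue" by (rule bl) measurable
        then show ?thesis using Tl by (intro sets.Int)
      qed
      finally have Cm: "C \<inter> ball 0 1 \<in> sets lebesgue"
        unfolding C_def by (rule cone_ball_sets[OF s0])
      define K where "K = measure lebesgue (C \<inter> ball 0 1)"
      have K0: "0 \<le> K" unfolding K_def by simp
      have V0: "0 \<le> ?V" by simp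
      have c0: "0 \<le> ?c" by (rule c_alpha_nonneg)
      have "D = T \<inter> {z. norm z \<le> b}" unfolding Deq Teq using d0 by (auto simp: b_def)
      also have "\<dots> \<in> sets lebesgue"
      proof -
        have "{z::real^'n. norm z \<le> b} \<in> sets lebesgue" by (rule bl) measurable
        then show ?thesis using Tl by (intro sets.Int)
      qed
      finally have Dl: "D \<in> sets lebesgue" .
      have DT: "D \<subseteq> T" unfolding D_def T_def by auto
      have Db: "D \<subseteq> ball 0 1" using DT Tb by auto
      have DM: "D \<in> sets ?M" by (rule nu_sets(2)[OF Dl Db])
      have d4: "d / 4 < 1" using d32 by simp
      define P where "P j = C \<inter> {z. 1 - d / 2 ^ (j + 2) \<le> norm z \<and> norm z < 1 - d / 2 ^ (j + 3)}" for j :: nat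
      define s1 where "s1 = 1 - 9 * d / 32"
      define R where "R = C \<inter> {z. s1 \<le> norm z \<and> norm z < b}"
      have pj: "d / 2 ^ (j + 2) \<le> d / 4" "d / 2 ^ (j + 3) \<le> d / 2 ^ (j + 2)" "0 < d / 2 ^ (j + 3)" for j :: nat
        using d0 by (auto simp: field_simps power_add)
      have P_props: "P j \<in> sets lebesgue \<and> P j \<subseteq> ball 0 1 \<and>
          measure lebesgue (P j) = ((1 - d / 2 ^ (j + 3)) ^ ?n - (1 - d / 2 ^ (j + 2)) ^ ?n) * K" for j
      proof -
        have h: "0 \<le> 1 - d / 2 ^ (j + 2)" "1 - d / 2 ^ (j + 2) \<le> 1 - d / 2 ^ (j + 3)" "1 - d / 2 ^ (j + 3) \<le> 1"
          using pj[of j] d4 by linarith+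
        show ?thesis unfolding P_def C_def K_def using shell[OF Cm[unfolded C_def] h] by blast
      qed
      have s1b: "1/10 \<le> s1" "s1 \<le> b" unfolding s1_def b_def using d32 d0 by auto
      have R_props: "R \<in> sets lebesgue \<and> R \<subseteq> ball 0 1 \<and>
          measure lebesgue R = (b ^ ?n - s1 ^ ?n) * K"
      proof -
        have h: "0 \<le> s1" "s1 \<le> b" "b \<le> 1" using s1b d0 unfolding b_def by auto
        show ?thesis unfolding R_def C_def K_def using shell[OF Cm[unfolded C_def] h] by blast
      qed
      have cover: "T \<subseteq> D \<union> (\<Union>j. P j)"
      proof
        fix z assume z: "z \<in> T"
        show "z \<in> D \<union> (\<Union>j. P j)"
        proof (cases "norm z \<le> b")
          case True then show ?thesis using z unfolding Teq Deq by auto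
        next
          case False
          define u where "u = 1 - norm z"
          have u: "0 < u" "u < d / 4" using z False unfolding Teq u_def b_def by auto
          obtain j where j: "d / 2 ^ (j + 3) < u" "u \<le> d / 2 ^ (j + 2)" using find_j[OF u] by blast
          have "z \<in> P j" using z j unfolding P_def Teq u_def by auto
          then show ?thesis by blast
        qed
      qed
      define G where "G = ?c * 8 powr \<bar>\<alpha>\<bar> * real ?n * K / ?V * (d powr \<alpha> * d / 8)"
      have G0: "0 \<le> G" unfolding G_def using c0 K0 V0 d0 by simp
      have Pbound: "emeasure ?M (P j) \<le> ennreal (G * \<rho> ^ j)" for j
      proof -
        have hi: "(1 - norm z ^ 2) powr \<alpha> \<le> 8 powr \<bar>\<alpha>\<bar> * (d / 2 ^ j) powr \<alpha>" if z: "z \<in> P j" for z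
        proof -
          define u where "u = 1 - norm z"
          have u: "d / 2 ^ (j + 3) < u" "u \<le> d / 2 ^ (j + 2)" using z unfolding P_def u_def by auto
          have u1: "0 \<le> u" "u \<le> 1" using u pj[of j] d4 by linarith+
          have xb: "u \<le> 1 - norm z ^ 2" "1 - norm z ^ 2 \<le> 2 * u"
            using x_bounds[of "norm z" u] u1 u_def by auto
          have e1: "d / 2 ^ j / 8 = d / 2 ^ (j + 3)" by (simp add: power_add)
          have e2: "2 * (d / 2 ^ (j + 2)) \<le> d / 2 ^ j" using d0 by (simp add: power_add field_simps)
          show ?thesis
            by (rule powr_bounds(1)) (use d0 u xb e1 e2 in auto)
        qed
        have "emeasure ?M (P j) \<le> ennreal (?c * (8 powr \<bar>\<alpha>\<bar> * (d / 2 ^ j) powr \<alpha>) * measure lebesgue (P j) / ?V)"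
          using P_props[of j] by (intro nu_alpha_bound(2)[where L = 0]) (auto intro: hi)
        also have "\<dots> \<le> ennreal (G * \<rho> ^ j)"
        proof (rule ennreal_leI)
          have "measure lebesgue (P j) \<le> real ?n * (d / 2 ^ (j + 3)) * K"
          proof -
            have "(1 - d / 2 ^ (j + 3)) ^ ?n - (1 - d / 2 ^ (j + 2)) ^ ?n \<le> real ?n * ((1 - d / 2 ^ (j + 3)) - (1 - d / 2 ^ (j + 2)))"
              using pj[of j] d4 by (intro pow_diff_upper) linarith+
            also have "(1 - d / 2 ^ (j + 3)) - (1 - d / 2 ^ (j + 2)) = d / 2 ^ (j + 3)"
              by (simp add: power_add field_simps)
            finally have le: "(1 - d / 2 ^ (j + 3)) ^ ?n - (1 - d / 2 ^ (j + 2)) ^ ?n \<le> real ?n * (d / 2 ^ (j + 3))" .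
            have eqm: "measure lebesgue (P j) = ((1 - d / 2 ^ (j + 3)) ^ ?n - (1 - d / 2 ^ (j + 2)) ^ ?n) * K"
              using P_props[of j] by blast
            show ?thesis unfolding eqm by (rule mult_right_mono[OF le K0])
          qed
          then have "?c * (8 powr \<bar>\<alpha>\<bar> * (d / 2 ^ j) powr \<alpha>) * measure lebesgue (P j) / ?V \<le>
              ?c * (8 powr \<bar>\<alpha>\<bar> * (d / 2 ^ j) powr \<alpha>) * (real ?n * (d / 2 ^ (j + 3)) * K) / ?V"
            using c0 V0 by (intro divide_right_mono mult_left_mono) auto
          also have "\<dots> = ?c * 8 powr \<bar>\<alpha>\<bar> * real ?n * K / ?V * ((d / 2 ^ j) powr \<alpha> * (d / 2 ^ (j + 3)))"
            by (simp add: mult_ac)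
          also have "\<dots> = G * \<rho> ^ j" unfolding G_def \<rho>_def rho0_def geo_term[OF d0] by simp
          finally show "?c * (8 powr \<bar>\<alpha>\<bar> * (d / 2 ^ j) powr \<alpha>) * measure lebesgue (P j) / ?V \<le> G * \<rho> ^ j" .
        qed
        finally show ?thesis .
      qed
      have \<rho>: "0 \<le> \<rho>" "\<rho> < 1" unfolding \<rho>_def using rho0_lt[OF \<alpha>] by (auto simp: rho0_def)
      have sums: "(\<lambda>j. G * \<rho> ^ j) sums (G / (1 - \<rho>))"
        using sums_mult[OF geometric_sums[of \<rho>], of G] \<rho> by simp
      have PM: "P j \<in> sets ?M" for j using P_props[of j] nu_sets(2)[of "P j"] by blast
      have UM: "(\<Union>j. P j) \<in> sets ?M" using PM by (intro sets.countable_UN) auto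
      have "emeasure ?M T \<le> emeasure ?M (D \<union> (\<Union>j. P j))"
        using cover UM DM by (intro emeasure_mono) auto
      also have "\<dots> \<le> emeasure ?M D + emeasure ?M (\<Union>j. P j)"
        using UM DM by (intro emeasure_subadditive) auto
      also have "emeasure ?M (\<Union>j. P j) \<le> (\<Sum>j. emeasure ?M (P j))"
        using PM by (intro emeasure_subadditive_countably) auto
      also have "(\<Sum>j. emeasure ?M (P j)) \<le> (\<Sum>j. ennreal (G * \<rho> ^ j))"
        by (intro suminf_le Pbound summableI)
      also have "(\<Sum>j. ennreal (G * \<rho> ^ j)) = ennreal (G / (1 - \<rho>))"
        using sums G0 \<rho> by (intro suminf_ennreal_eq) auto
      finally have up: "emeasure ?M T \<le> emeasure ?M D + ennreal (G / (1 - \<rho>))" by simp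
      define L0 where "L0 = ?c * (4 powr (-\<bar>\<alpha>\<bar>) * d powr \<alpha>) * (d / 32 * (1/10) ^ (?n - 1) * K) / ?V"
      have lo: "ennreal L0 \<le> emeasure ?M D"
      proof -
        have RD: "R \<subseteq> D" unfolding R_def Deq s1_def a_def using d0 by auto
        have lo1: "4 powr (-\<bar>\<alpha>\<bar>) * d powr \<alpha> \<le> (1 - norm z ^ 2) powr \<alpha> \<and>
            (1 - norm z ^ 2) powr \<alpha> \<le> 4 powr \<bar>\<alpha>\<bar> * d powr \<alpha>" if z: "z \<in> R" for z
        proof -
          define u where "u = 1 - norm z"
          have u: "d / 4 < u" "u \<le> 9 * d / 32" using z unfolding R_def u_def s1_def b_def by auto
          have u1: "0 \<le> u" "u \<le> 1" using u d0 d32 by linarith+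
          have xb: "u \<le> 1 - norm z ^ 2" "1 - norm z ^ 2 \<le> 2 * u"
            using x_bounds[of "norm z" u] u1 u_def by auto
          have "4 powr (-\<bar>\<alpha>\<bar>) * d powr \<alpha> \<le> (1 - norm z ^ 2) powr \<alpha>"
            by (rule powr_bounds(2)) (use d0 u xb in auto)
          moreover have "(1 - norm z ^ 2) powr \<alpha> \<le> 4 powr \<bar>\<alpha>\<bar> * d powr \<alpha>"
            by (rule powr_bounds(1)) (use d0 u xb in auto)
          ultimately show ?thesis by blast
        qed
        have "measure lebesgue R \<ge> d / 32 * (1/10) ^ (?n - 1) * K"
        proof -
          have m0: "(b - s1) * s1 ^ (?n - 1) \<le> b ^ ?n - s1 ^ ?n"
            using s1b by (intro pow_diff_lower) auto
          have bs: "b - s1 = d / 32" unfolding b_def s1_def by simp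
          have p10: "(1/10) ^ (?n - 1) \<le> s1 ^ (?n - 1)" using s1b by (intro power_mono) auto
          have m1: "d / 32 * (1/10) ^ (?n - 1) \<le> d / 32 * s1 ^ (?n - 1)"
            using p10 d0 by (intro mult_left_mono) auto
          have "d / 32 * (1/10) ^ (?n - 1) \<le> b ^ ?n - s1 ^ ?n"
            using m0 m1 unfolding bs by linarith
          then have le: "d / 32 * (1/10) ^ (?n - 1) * K \<le> (b ^ ?n - s1 ^ ?n) * K"
            using K0 by (rule mult_right_mono)
          have eqm: "measure lebesgue R = (b ^ ?n - s1 ^ ?n) * K" using R_props by blast
          show ?thesis unfolding eqm by (rule le)
        qed
        then have "L0 \<le> ?c * (4 powr (-\<bar>\<alpha>\<bar>) * d powr \<alpha>) * measure lebesgue R / ?V"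
          unfolding L0_def using c0 V0 by (intro divide_right_mono mult_left_mono) auto
        then have "ennreal L0 \<le> ennreal (?c * (4 powr (-\<bar>\<alpha>\<bar>) * d powr \<alpha>) * measure lebesgue R / ?V)"
          by (rule ennreal_leI)
        also have "\<dots> \<le> emeasure ?M R"
          using R_props by (intro nu_alpha_bound(1)[where H = "(4 powr \<bar>\<alpha>\<bar> * d powr \<alpha>)"])
            (use lo1 in \<open>auto simp del: powr_minus\<close>)
        also have "\<dots> \<le> emeasure ?M D" using RD DM by (intro emeasure_mono)
        finally show ?thesis .
      qed
      have GL: "G / (1 - \<rho>) = Cst \<alpha> ?n * L0"
        unfolding G_def L0_def Cst_def \<rho>_def using \<rho> d0 by (simp add: field_simps \<rho>_def)
      have "emeasure ?M T \<le> emeasure ?M D + ennreal (Cst \<alpha> ?n) * ennreal L0"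
      proof -
        have L00: "0 \<le> L0" unfolding L0_def using c0 d0 K0 V0 by simp
        show ?thesis using up GL ennreal_mult[OF Cst_nonneg[OF \<alpha>] L00] by simp
      qed
      also have "\<dots> \<le> emeasure ?M D + ennreal (Cst \<alpha> ?n) * emeasure ?M D"
        using lo by (intro add_mono mult_left_mono) auto
      also have "\<dots> = ennreal (1 + Cst \<alpha> ?n) * emeasure ?M D"
        using Cst_nonneg[OF \<alpha>] by (simp add: ennreal_plus distrib_right)
      finally have main: "emeasure ?M T \<le> ennreal (1 + Cst \<alpha> ?n) * emeasure ?M D" .
      show ?thesis
      proof (cases "emeasure ?M T = \<infinity>")
        case True
        then have "nu_alpha \<alpha> T = 0" unfolding nu_alpha_def by (simp add: measure_def)
        then show ?thesis using C4 unfolding T_def nu_alpha_def by simp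
      next
        case False
        have "emeasure ?M D \<le> emeasure ?M T" using DT True by (intro emeasure_mono)
        then have Dfin: "emeasure ?M D < \<infinity>" using False by (simp add: less_top order.strict_trans1)
        have "nu_alpha \<alpha> T = enn2real (emeasure ?M T)" unfolding nu_alpha_def measure_def ..
        also have "\<dots> \<le> enn2real (ennreal (1 + Cst \<alpha> ?n) * emeasure ?M D)"
          using main Dfin by (intro enn2real_mono) (auto simp: ennreal_mult_less_top)
        also have "\<dots> = (1 + Cst \<alpha> ?n) * nu_alpha \<alpha> D"
          using C4 unfolding nu_alpha_def measure_def by (simp add: enn2real_mult)
        finally show ?thesis unfolding T_def D_def .
      qed
    qed
  qed
qed


theorem lemma2p6:
  fixes \<alpha> :: real
  assumes "CARD('n::finite) \<ge> 3" and "-1 < \<alpha>"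
  shows "\<exists>C4::real. \<forall>(N::nat) (Ms :: nat \<Rightarrow> nat \<Rightarrow> nat) (Ds :: nat \<Rightarrow> nat \<Rightarrow> nat \<Rightarrow> (real^'n) set).
           (\<forall>t\<in>{1..N}. dyadic_system (Ms t) (Ds t) \<and>
                         dyadic_associated (Ms t) (Ds t) (1/96) (1/12) 4) \<longrightarrow>
           (\<forall>t\<in>{1..N}. \<forall>Q\<in>cubes (Ms t) (Ds t).
              nu_alpha \<alpha> (tent Q 1) \<le> C4 * nu_alpha \<alpha> (tent Q 1 - tent Q (1/2)))"
proof (intro exI[of _ "1 + Cst \<alpha> CARD('n)"] allI impI ballI)
  fix N :: nat and Ms :: "nat \<Rightarrow> nat \<Rightarrow> nat" and Ds :: "nat \<Rightarrow> nat \<Rightarrow> nat \<Rightarrow> (real^'n) set" and t Q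
  assume H: "\<forall>t\<in>{1..N}. dyadic_system (Ms t) (Ds t) \<and> dyadic_associated (Ms t) (Ds t) (1/96) (1/12) 4"
    and t: "t \<in> {1..N}" and Q: "Q \<in> cubes (Ms t) (Ds t)"
  from Q obtain k i where Qk: "Q = Ds t k i" "1 \<le> k" "i \<in> {1..Ms t k}" by (auto simp: cubes_def)
  have "dyadic_system (Ms t) (Ds t)" using H t by blast
  then have "(\<Union>i\<in>{1..Ms t k}. Ds t k i) = sphere 0 1" using Qk(2) unfolding dyadic_system_def by blast
  then have Qs: "Q \<subseteq> sphere 0 1" using Qk by blast
  show "nu_alpha \<alpha> (tent Q 1) \<le> (1 + Cst \<alpha> CARD('n)) * nu_alpha \<alpha> (tent Q 1 - tent Q (1/2))"
    by (rule core[OF Qs assms(2)])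
qed

end
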